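(* Let $G$ be a finite simple graph on $n$ vertices. Then there exists a finite simple graph $\widehat{G}$ such that \[ h(G,x)=x^{n}\,I(\widehat{G},1/x). \]
   Context: For a graph $G$ on $n$ vertices, let $a_k(G)$ denote the number of ways to cover all vertices of $G$ by exactly $k$ pairwise disjoint cliques of $G$ (i.e. the number of partitions of $V(G)$ into exactly $k$ parts, each inducing a complete subgraph). The adjoint polynomial of $G$ is $h(G,x)=\sum_{k=1}^n(-1)^{n-k}a_k(G)x^k$. For a graph $H$, the independence polynomial is $I(H,x)=\sum_{k\ge 0}(-1)^k i_k(H)x^k$, where $i_k(H)$ is the number of independent sets of size $k$ in $H$ (so $i_0(H)=1$). *)

theory Defs
  imports Complex_Main
begin

definition simple_graph :: "'a set \<Rightarrow> 'a set set \<Rightarrow> bool" where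
  "simple_graph V E \<longleftrightarrow> finite V \<and> (\<forall>e\<in>E. e \<subseteq> V \<and> card e = 2)"

definition is_clique :: "'a set \<Rightarrow> 'a set set \<Rightarrow> 'a set \<Rightarrow> bool" where
  "is_clique V E C \<longleftrightarrow> C \<subseteq> V \<and> (\<forall>u\<in>C. \<forall>v\<in>C. u \<noteq> v \<longrightarrow> {u, v} \<in> E)"

definition clique_covers :: "'a set \<Rightarrow> 'a set set \<Rightarrow> nat \<Rightarrow> 'a set set set" where
  "clique_covers V E k = {P. \<Union>P = V \<and> (\<forall>C\<in>P. C \<noteq> {} \<and> is_clique V E C)
      \<and> (\<forall>C\<in>P. \<forall>D\<in>P. C \<noteq> D \<longrightarrow> C \<inter> D = {}) \<and> finite P \<and> card P = k}"

definition a_coeff :: "'a set \<Rightarrow> 'a set set \<Rightarrow> nat \<Rightarrow> nat" where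
  "a_coeff V E k = card (clique_covers V E k)"

definition adjoint_poly :: "'a set \<Rightarrow> 'a set set \<Rightarrow> real \<Rightarrow> real" where
  "adjoint_poly V E x = (\<Sum>k=1..card V. (-1) ^ (card V - k) * real (a_coeff V E k) * x ^ k)"

definition independent_set :: "'a set \<Rightarrow> 'a set set \<Rightarrow> 'a set \<Rightarrow> bool" where
  "independent_set V E S \<longleftrightarrow> S \<subseteq> V \<and> (\<forall>u\<in>S. \<forall>v\<in>S. {u, v} \<notin> E)"

definition i_coeff :: "'a set \<Rightarrow> 'a set set \<Rightarrow> nat \<Rightarrow> nat" where
  "i_coeff V E k = card {S. independent_set V E S \<and> card S = k}"

definition indep_poly :: "'a set \<Rightarrow> 'a set set \<Rightarrow> real \<Rightarrow> real" where
  "indep_poly V E x = (\<Sum>k=0..card V. (-1) ^ k * real (i_coeff V E k) * x ^ k)"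

end

theory Submission
  imports Defs "HOL-Library.Nat_Bijection"
begin


lemma simple_graph_image:
  assumes sg: "simple_graph V E" and inj: "inj_on g V"
  shows "simple_graph (g ` V) ((`) g ` E)"
  unfolding simple_graph_def
proof (intro conjI ballI)
  show "finite (g ` V)" using sg by (simp add: simple_graph_def)
  fix e assume "e \<in> (`) g ` E"
  then obtain d where d: "d \<in> E" "e = g ` d" by auto
  have "d \<subseteq> V" "card d = 2" using sg d(1) by (auto simp: simple_graph_def)
  moreover have "card (g ` d) = card d" using \<open>d \<subseteq> V\<close> by (intro card_image inj_on_subset[OF inj])
  ultimately show "e \<subseteq> g ` V" "card e = 2" using d(2) by auto
qed

lemma inj_Pow: "inj_on g V \<Longrightarrow> inj_on ((`) g) (Pow V)"
  by (rule inj_on_image) simp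

lemma edge_image_iff:
  assumes sg: "simple_graph V E" and inj: "inj_on g V" and uv: "u \<in> V" "v \<in> V"
  shows "{g u, g v} \<in> (`) g ` E \<longleftrightarrow> {u, v} \<in> E"
proof
  assume "{g u, g v} \<in> (`) g ` E"
  then obtain d where d: "d \<in> E" "{g u, g v} = g ` d" by (rule imageE) 
  have "d \<subseteq> V" using sg d(1) by (auto simp: simple_graph_def)
  then have "g ` d = g ` {u, v}" using d(2) by simp
  then have "d = {u, v}" using inj_on_image_eq_iff[OF inj, of d "{u,v}"] \<open>d \<subseteq> V\<close> uv by simp
  then show "{u, v} \<in> E" using d(1) by simp
next
  assume "{u, v} \<in> E"
  then have "g ` {u, v} \<in> (`) g ` E" by (rule imageI)
  then show "{g u, g v} \<in> (`) g ` E" by simp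
qed
lemma i_coeff_le:
  assumes sg: "simple_graph V E" and inj: "inj_on g V"
  shows "i_coeff V E k \<le> i_coeff (g ` V) ((`) g ` E) k"
  unfolding i_coeff_def
proof (rule card_inj_on_le[where f="(`) g"])
  have fin: "finite V" using sg by (simp add: simple_graph_def)
  show "finite {S. independent_set (g ` V) ((`) g ` E) S \<and> card S = k}"
    by (rule finite_subset[of _ "Pow (g ` V)"]) (use fin in \<open>auto simp: independent_set_def\<close>)
  show "inj_on ((`) g) {S. independent_set V E S \<and> card S = k}"
    by (rule inj_on_subset[OF inj_Pow[OF inj]]) (auto simp: independent_set_def)
  show "(`) g ` {S. independent_set V E S \<and> card S = k}
        \<subseteq> {S. independent_set (g ` V) ((`) g ` E) S \<and> card S = k}"
  proof (rule image_subsetI)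
    fix S assume "S \<in> {S. independent_set V E S \<and> card S = k}"
    then have S: "independent_set V E S" "card S = k" by auto
    then have SV: "S \<subseteq> V" by (simp add: independent_set_def)
    have c: "card (g ` S) = k" using SV S(2) card_image[OF inj_on_subset[OF inj]] by simp
    have "independent_set (g ` V) ((`) g ` E) (g ` S)"
      unfolding independent_set_def
    proof (intro conjI ballI)
      show "g ` S \<subseteq> g ` V" using SV by auto
      fix a b assume "a \<in> g ` S" "b \<in> g ` S"
      then obtain u v where "u \<in> S" "v \<in> S" "a = g u" "b = g v" by auto
      moreover have "{u, v} \<notin> E" using S(1) \<open>u \<in> S\<close> \<open>v \<in> S\<close> by (simp add: independent_set_def)
      ultimately show "{a, b} \<notin> (`) g ` E"
        using edge_image_iff[OF sg inj, of u v] SV by auto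
    qed
    then show "g ` S \<in> {S. independent_set (g ` V) ((`) g ` E) S \<and> card S = k}" using c by simp
  qed
qed

lemma a_coeff_le:
  assumes sg: "simple_graph V E" and inj: "inj_on g V"
  shows "a_coeff V E k \<le> a_coeff (g ` V) ((`) g ` E) k"
  unfolding a_coeff_def
proof (rule card_inj_on_le[where f="(`) ((`) g)"])
  have fin: "finite V" using sg by (simp add: simple_graph_def)
  show "finite (clique_covers (g ` V) ((`) g ` E) k)"
    by (rule finite_subset[of _ "Pow (Pow (g ` V))"]) (use fin in \<open>auto simp: clique_covers_def\<close>)
  have "inj_on ((`) ((`) g)) (Pow (Pow V))" using inj_Pow[OF inj_Pow[OF inj]] .
  then show "inj_on ((`) ((`) g)) (clique_covers V E k)"
    by (rule inj_on_subset) (auto simp: clique_covers_def)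
  show "(`) ((`) g) ` clique_covers V E k \<subseteq> clique_covers (g ` V) ((`) g ` E) k"
  proof (rule image_subsetI)
    fix P assume P: "P \<in> clique_covers V E k"
    have PV: "\<And>C. C \<in> P \<Longrightarrow> C \<subseteq> V" using P by (auto simp: clique_covers_def)
    have injP: "inj_on ((`) g) P"
      using inj_Pow[OF inj] by (rule inj_on_subset) (use PV in auto)
    have disj: "\<And>C D. C \<in> P \<Longrightarrow> D \<in> P \<Longrightarrow> C \<noteq> D \<Longrightarrow> C \<inter> D = {}"
      using P by (auto simp: clique_covers_def)
    show "(`) g ` P \<in> clique_covers (g ` V) ((`) g ` E) k"
      unfolding clique_covers_def
    proof (intro CollectI conjI ballI impI)
      show "\<Union> ((`) g ` P) = g ` V" using P by (auto simp: clique_covers_def)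
      show "finite ((`) g ` P)" using P by (auto simp: clique_covers_def)
      show "card ((`) g ` P) = k" using P injP by (auto simp: clique_covers_def card_image)
      fix C' assume "C' \<in> (`) g ` P"
      then obtain C where C: "C \<in> P" "C' = g ` C" by auto
      show "C' \<noteq> {}" using P C by (auto simp: clique_covers_def)
      have cl: "is_clique V E C" using P C by (auto simp: clique_covers_def)
      show "is_clique (g ` V) ((`) g ` E) C'"
        unfolding is_clique_def
      proof (intro conjI ballI impI)
        show "C' \<subseteq> g ` V" using C PV by auto
        fix a b assume "a \<in> C'" "b \<in> C'" "a \<noteq> b"
        then obtain u v where uv: "u \<in> C" "v \<in> C" "a = g u" "b = g v" "u \<noteq> v" using C by auto
        then have "{u, v} \<in> E" using cl by (auto simp: is_clique_def)
        then have "g ` {u, v} \<in> (`) g ` E" by (rule imageI)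
        then show "{a, b} \<in> (`) g ` E" using uv by simp
      qed
    next
      fix C' D' assume "C' \<in> (`) g ` P" "D' \<in> (`) g ` P" "C' \<noteq> D'"
      then obtain C D where "C \<in> P" "D \<in> P" "C' = g ` C" "D' = g ` D" "C \<noteq> D" by auto
      then have "C \<inter> D = {}" using disj by auto
      then show "C' \<inter> D' = {}" using \<open>C' = g ` C\<close> \<open>D' = g ` D\<close> PV \<open>C \<in> P\<close> \<open>D \<in> P\<close> inj
        using inj_on_image_Int[OF inj, of C D] by simp
    qed
  qed
qed

lemma coeff_image:
  assumes sg: "simple_graph V E" and inj: "inj_on g V"
  shows "a_coeff (g ` V) ((`) g ` E) k = a_coeff V E k"
    "i_coeff (g ` V) ((`) g ` E) k = i_coeff V E k"
    "card (g ` V) = card V"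
proof -
  define h where "h = inv_into V g"
  have injh: "inj_on h (g ` V)" unfolding h_def by (rule inj_on_inv_into) simp
  have hV: "h ` g ` V = V" unfolding h_def using inj by simp
  have hE: "(`) h ` (`) g ` E = E"
  proof -
    have "\<And>e. e \<in> E \<Longrightarrow> h ` g ` e = e" unfolding h_def using inj sg
      by (auto simp: simple_graph_def inv_into_image_cancel)
    then show ?thesis by (force simp: image_comp)
  qed
  have sg2: "simple_graph (g ` V) ((`) g ` E)" by (rule simple_graph_image[OF sg inj])
  show "a_coeff (g ` V) ((`) g ` E) k = a_coeff V E k"
    using a_coeff_le[OF sg inj, of k] a_coeff_le[OF sg2 injh, of k] hV hE by simp
  show "i_coeff (g ` V) ((`) g ` E) k = i_coeff V E k"
    using i_coeff_le[OF sg inj, of k] i_coeff_le[OF sg2 injh, of k] hV hE by simp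
  show "card (g ` V) = card V" using inj by (simp add: card_image)
qed



definition hW :: "nat set \<Rightarrow> nat set set \<Rightarrow> (nat \<times> nat) set" where
  "hW V E = {(u, v). u \<in> V \<and> v \<in> V \<and> u < v \<and> {u, v} \<in> E}"

definition conf0 :: "nat set set \<Rightarrow> nat \<times> nat \<Rightarrow> nat \<times> nat \<Rightarrow> bool" where
  "conf0 E p q \<longleftrightarrow> (snd p = snd q \<and> fst p \<noteq> fst q) \<or> snd p = fst q
     \<or> (fst p = fst q \<and> snd p \<noteq> snd q \<and> {snd p, snd q} \<notin> E)"

definition conf :: "nat set set \<Rightarrow> nat \<times> nat \<Rightarrow> nat \<times> nat \<Rightarrow> bool" where
  "conf E p q \<longleftrightarrow> conf0 E p q \<or> conf0 E q p"

definition hF :: "nat set \<Rightarrow> nat set set \<Rightarrow> (nat \<times> nat) set set" where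
  "hF V E = {{p, q} | p q. p \<in> hW V E \<and> q \<in> hW V E \<and> p \<noteq> q \<and> conf E p q}"

lemma conf_sym: "conf E p q = conf E q p"
  unfolding conf_def by blast

lemma hF_iff: "{p, q} \<in> hF V E \<longleftrightarrow> p \<in> hW V E \<and> q \<in> hW V E \<and> p \<noteq> q \<and> conf E p q"
proof
  assume "{p, q} \<in> hF V E"
  then obtain p' q' where pq: "{p, q} = {p', q'}" "p' \<in> hW V E" "q' \<in> hW V E" "p' \<noteq> q'" "conf E p' q'"
    unfolding hF_def by blast
  from pq(1) have "(p = p' \<and> q = q') \<or> (p = q' \<and> q = p')" by (simp add: doubleton_eq_iff)
  then show "p \<in> hW V E \<and> q \<in> hW V E \<and> p \<noteq> q \<and> conf E p q"
  proof
    assume "p = p' \<and> q = q'" then show ?thesis using pq by simp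
  next
    assume "p = q' \<and> q = p'" then show ?thesis using pq conf_sym[of E p' q'] by auto
  qed
next
  assume "p \<in> hW V E \<and> q \<in> hW V E \<and> p \<noteq> q \<and> conf E p q"
  then show "{p, q} \<in> hF V E" unfolding hF_def by blast
qed

lemma hW_sub: "hW V E \<subseteq> V \<times> V" unfolding hW_def by auto

lemma simple_hat:
  assumes "finite V"
  shows "simple_graph (hW V E) (hF V E)"
  unfolding simple_graph_def
proof (intro conjI ballI)
  show "finite (hW V E)" by (rule finite_subset[OF hW_sub]) (simp add: assms)
  fix e assume "e \<in> hF V E"
  then obtain p q where "e = {p, q}" "p \<in> hW V E" "q \<in> hW V E" "p \<noteq> q"
    unfolding hF_def by blast
  then show "e \<subseteq> hW V E" "card e = 2" by auto
qed

lemma indep_iff: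
  "independent_set (hW V E) (hF V E) S \<longleftrightarrow>
     S \<subseteq> hW V E \<and> (\<forall>p\<in>S. \<forall>q\<in>S. p \<noteq> q \<longrightarrow> \<not> conf E p q)"
  unfolding independent_set_def
proof (intro iffI conjI ballI impI)
  assume A: "S \<subseteq> hW V E \<and> (\<forall>u\<in>S. \<forall>v\<in>S. {u, v} \<notin> hF V E)"
  then show "S \<subseteq> hW V E" by simp
  fix p q assume "p \<in> S" "q \<in> S" "p \<noteq> q"
  then show "\<not> conf E p q" using A hF_iff[of p q V E] by auto
next
  assume A: "S \<subseteq> hW V E \<and> (\<forall>p\<in>S. \<forall>q\<in>S. p \<noteq> q \<longrightarrow> \<not> conf E p q)"
  then show "S \<subseteq> hW V E" by simp
  fix p q assume "p \<in> S" "q \<in> S"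
  then show "{p, q} \<notin> hF V E" using A hF_iff[of p q V E] by auto
qed

definition cov :: "nat set \<Rightarrow> nat set set \<Rightarrow> nat set set set" where
  "cov V E = {P. \<Union>P = V \<and> (\<forall>C\<in>P. C \<noteq> {} \<and> is_clique V E C)
      \<and> (\<forall>C\<in>P. \<forall>D\<in>P. C \<noteq> D \<longrightarrow> C \<inter> D = {}) \<and> finite P}"

definition phi :: "nat set set \<Rightarrow> (nat \<times> nat) set" where
  "phi P = {(Min C, v) | C v. C \<in> P \<and> v \<in> C \<and> v \<noteq> Min C}"

definition psi :: "nat set \<Rightarrow> (nat \<times> nat) set \<Rightarrow> nat set set" where
  "psi V S = (\<lambda>r. insert r {v. (r, v) \<in> S}) ` (V - snd ` S)"

context
  fixes V :: "nat set" and E :: "nat set set" and P :: "nat set set"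
  assumes fV: "finite V" and P: "P \<in> cov V E"
begin

lemma blk_sub: "C \<in> P \<Longrightarrow> C \<subseteq> V"
  using P unfolding cov_def by blast

lemma blk_fin: "C \<in> P \<Longrightarrow> finite C"
  using blk_sub fV finite_subset by blast

lemma blk_ne: "C \<in> P \<Longrightarrow> C \<noteq> {}"
  using P unfolding cov_def by blast

lemma blk_min: "C \<in> P \<Longrightarrow> Min C \<in> C"
  using blk_fin blk_ne by simp

lemma blk_le: "C \<in> P \<Longrightarrow> x \<in> C \<Longrightarrow> Min C \<le> x"
  using blk_fin by simp

lemma blk_uniq: "C \<in> P \<Longrightarrow> D \<in> P \<Longrightarrow> x \<in> C \<Longrightarrow> x \<in> D \<Longrightarrow> C = D"
  using P unfolding cov_def by blast

lemma blk_edge: "C \<in> P \<Longrightarrow> u \<in> C \<Longrightarrow> v \<in> C \<Longrightarrow> u \<noteq> v \<Longrightarrow> {u, v} \<in> E"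
  using P unfolding cov_def is_clique_def by blast

lemma blk_cover: "x \<in> V \<Longrightarrow> \<exists>C\<in>P. x \<in> C"
  using P unfolding cov_def by blast

lemma finP: "finite P"
  using P unfolding cov_def by blast

lemma phi_sub: "phi P \<subseteq> hW V E"
proof
  fix p assume "p \<in> phi P"
  then obtain C v where p: "p = (Min C, v)" "C \<in> P" "v \<in> C" "v \<noteq> Min C"
    unfolding phi_def by blast
  have "Min C < v" using blk_le[OF p(2,3)] p(4) by simp
  moreover have "{Min C, v} \<in> E" using blk_edge[OF p(2) blk_min[OF p(2)] p(3)] p(4) by simp
  moreover have "Min C \<in> V" "v \<in> V" using blk_sub[OF p(2)] blk_min[OF p(2)] p(3) by auto
  ultimately show "p \<in> hW V E" unfolding hW_def p(1) by simp
qed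

lemma phi_indep: "independent_set (hW V E) (hF V E) (phi P)"
  unfolding indep_iff
proof (intro conjI ballI impI phi_sub)
  fix p q assume pq: "p \<in> phi P" "q \<in> phi P" "p \<noteq> q"
  have noc: "\<not> conf0 E p q" if pq: "p \<in> phi P" "q \<in> phi P" "p \<noteq> q" for p q
  proof
    assume c: "conf0 E p q"
    obtain C v where p: "p = (Min C, v)" "C \<in> P" "v \<in> C" "v \<noteq> Min C"
      using pq(1) unfolding phi_def by blast
    obtain D w where q: "q = (Min D, w)" "D \<in> P" "w \<in> D" "w \<noteq> Min D"
      using pq(2) unfolding phi_def by blast
    from c have "(v = w \<and> Min C \<noteq> Min D) \<or> v = Min D \<or> (Min C = Min D \<and> v \<noteq> w \<and> {v, w} \<notin> E)"
      unfolding conf0_def p(1) q(1) by simp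
    then show False
    proof (elim disjE conjE)
      assume "v = w" "Min C \<noteq> Min D"
      then show False using blk_uniq[OF p(2) q(2) p(3)] q(3) by auto
    next
      assume "v = Min D"
      then have "C = D" using blk_uniq[OF p(2) q(2) p(3)] blk_min[OF q(2)] by auto
      then show False using \<open>v = Min D\<close> p(4) by simp
    next
      assume a: "Min C = Min D" "v \<noteq> w" "{v, w} \<notin> E"
      have "C = D" using blk_uniq[OF p(2) q(2) blk_min[OF p(2)]] blk_min[OF q(2)] a(1) by auto
      then show False using blk_edge[OF p(2) p(3) _ a(2)] q(3) a(3) by auto
    qed
  qed
  show "\<not> conf E p q" unfolding conf_def using noc[OF pq] noc[OF pq(2,1)] pq(3) by auto
qed

lemma phi_snd_inj: "inj_on snd (phi P)"
proof (rule inj_onI)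
  fix p q assume pq: "p \<in> phi P" "q \<in> phi P" "snd p = snd q"
  obtain C v where p: "p = (Min C, v)" "C \<in> P" "v \<in> C" "v \<noteq> Min C"
    using pq(1) unfolding phi_def by blast
  obtain D w where q: "q = (Min D, w)" "D \<in> P" "w \<in> D" "w \<noteq> Min D"
    using pq(2) unfolding phi_def by blast
  have "v = w" using pq(3) p(1) q(1) by simp
  then have "C = D" using blk_uniq[OF p(2) q(2) p(3)] q(3) by simp
  then show "p = q" using p(1) q(1) \<open>v = w\<close> by simp
qed

lemma phi_snd: "snd ` phi P = V - Min ` P"
proof (intro equalityI subsetI)
  fix x assume "x \<in> snd ` phi P"
  then obtain C where C: "C \<in> P" "x \<in> C" "x \<noteq> Min C" unfolding phi_def by auto
  have "x \<notin> Min ` P"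
  proof
    assume "x \<in> Min ` P"
    then obtain D where D: "D \<in> P" "x = Min D" by blast
    then have "C = D" using blk_uniq[OF C(1) D(1) C(2)] blk_min[OF D(1)] by simp
    then show False using C(3) D(2) by simp
  qed
  then show "x \<in> V - Min ` P" using blk_sub[OF C(1)] C(2) by auto
next
  fix x assume x: "x \<in> V - Min ` P"
  then obtain C where C: "C \<in> P" "x \<in> C" using blk_cover by auto
  have "x \<noteq> Min C" using x C(1) by auto
  then have "(Min C, x) \<in> phi P" unfolding phi_def using C by blast
  then show "x \<in> snd ` phi P" by force
qed

lemma Min_inj: "inj_on Min P"
proof (rule inj_onI)
  fix C D assume "C \<in> P" "D \<in> P" "Min C = Min D"
  then show "C = D" using blk_uniq[OF \<open>C \<in> P\<close> \<open>D \<in> P\<close> blk_min[OF \<open>C \<in> P\<close>]] blk_min[OF \<open>D \<in> P\<close>] by simp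
qed

lemma phi_card: "card (phi P) + card P = card V"
proof -
  have MV: "Min ` P \<subseteq> V" using blk_min blk_sub by blast
  have "card (phi P) = card (snd ` phi P)" using phi_snd_inj by (simp add: card_image)
  also have "\<dots> = card V - card (Min ` P)" unfolding phi_snd using MV fV by (simp add: card_Diff_subset finite_subset)
  also have "card (Min ` P) = card P" using Min_inj by (simp add: card_image)
  finally show ?thesis using card_mono[OF fV MV] Min_inj by (simp add: card_image)
qed

lemma psi_phi: "psi V (phi P) = P"
proof -
  have MV: "Min ` P \<subseteq> V" using blk_min blk_sub by blast
  have R: "V - snd ` phi P = Min ` P" unfolding phi_snd using MV by blast
  have B: "insert (Min C) {v. (Min C, v) \<in> phi P} = C" if C: "C \<in> P" for C
  proof (intro equalityI subsetI)
    fix x assume "x \<in> insert (Min C) {v. (Min C, v) \<in> phi P}"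
    then consider "x = Min C" | "(Min C, x) \<in> phi P" by blast
    then show "x \<in> C"
    proof cases
      case 1 then show ?thesis using blk_min[OF C] by simp
    next
      case 2
      then obtain D where D: "Min C = Min D" "D \<in> P" "x \<in> D" unfolding phi_def by blast
      then have "C = D" using Min_inj C by (simp add: inj_on_def)
      then show ?thesis using D(3) by simp
    qed
  next
    fix x assume "x \<in> C"
    then have "x = Min C \<or> (Min C, x) \<in> phi P" unfolding phi_def using C by blast
    then show "x \<in> insert (Min C) {v. (Min C, v) \<in> phi P}" by blast
  qed
  have "psi V (phi P) = (\<lambda>r. insert r {v. (r, v) \<in> phi P}) ` Min ` P"
    unfolding psi_def R ..
  also have "\<dots> = (\<lambda>C. insert (Min C) {v. (Min C, v) \<in> phi P}) ` P" by (simp add: image_comp)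
  also have "\<dots> = P" using B by simp
  finally show ?thesis .
qed

end

context
  fixes V :: "nat set" and E :: "nat set set" and S :: "(nat \<times> nat) set"
  assumes fV: "finite V" and S: "independent_set (hW V E) (hF V E) S"
begin

lemma S_W: "S \<subseteq> hW V E" using S unfolding indep_iff by blast

lemma S_mem: "(u, v) \<in> S \<Longrightarrow> u \<in> V \<and> v \<in> V \<and> u < v \<and> {u, v} \<in> E"
  using S_W unfolding hW_def by blast

lemma S_noc: "p \<in> S \<Longrightarrow> q \<in> S \<Longrightarrow> p \<noteq> q \<Longrightarrow> \<not> conf0 E p q"
  using S unfolding indep_iff conf_def by blast

lemma S_root: "(u, v) \<in> S \<Longrightarrow> u \<notin> snd ` S"
proof
  assume uv: "(u, v) \<in> S" and "u \<in> snd ` S"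
  then obtain w where w: "(w, u) \<in> S" by force
  have "w < u" using S_mem[OF w] by simp
  then have "(w, u) \<noteq> (u, v)" by simp
  then show False using S_noc[OF w uv] unfolding conf0_def by simp
qed

lemma S_snd: "(u, v) \<in> S \<Longrightarrow> (u', v) \<in> S \<Longrightarrow> u = u'"
  using S_noc[of "(u, v)" "(u', v)"] unfolding conf0_def by force

lemma S_same: "(r, v) \<in> S \<Longrightarrow> (r, w) \<in> S \<Longrightarrow> v \<noteq> w \<Longrightarrow> {v, w} \<in> E"
  using S_noc[of "(r, v)" "(r, w)"] unfolding conf0_def by force

definition blk :: "nat \<Rightarrow> nat set" where
  "blk r = insert r {v. (r, v) \<in> S}"

lemma psi_eq: "psi V S = blk ` (V - snd ` S)"
  unfolding psi_def blk_def ..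

lemma blk_sub2: "r \<in> V \<Longrightarrow> blk r \<subseteq> V"
  unfolding blk_def using S_mem by blast

lemma blk_Min: "r \<in> V \<Longrightarrow> Min (blk r) = r"
proof (rule Min_eqI)
  assume "r \<in> V"
  then show "finite (blk r)" using blk_sub2 fV finite_subset by blast
  show "r \<in> blk r" unfolding blk_def by simp
  fix y assume "y \<in> blk r"
  then show "r \<le> y" unfolding blk_def using S_mem by fastforce
qed

lemma psi_cov: "psi V S \<in> cov V E"
  unfolding cov_def psi_eq
proof (intro CollectI conjI ballI impI)
  show "\<Union> (blk ` (V - snd ` S)) = V"
  proof (intro equalityI subsetI)
    fix x assume "x \<in> \<Union> (blk ` (V - snd ` S))"
    then show "x \<in> V" using blk_sub2 by blast
  next
    fix x assume x: "x \<in> V"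
    show "x \<in> \<Union> (blk ` (V - snd ` S))"
    proof (cases "x \<in> snd ` S")
      case False
      then have "x \<in> blk x" "x \<in> V - snd ` S" using x unfolding blk_def by auto
      then show ?thesis by blast
    next
      case True
      then obtain u where u: "(u, x) \<in> S" by force
      then have "u \<in> V - snd ` S" using S_root[OF u] S_mem[OF u] by blast
      moreover have "x \<in> blk u" unfolding blk_def using u by simp
      ultimately show ?thesis by blast
    qed
  qed
  show "finite (blk ` (V - snd ` S))" using fV by simp
next
  fix C assume "C \<in> blk ` (V - snd ` S)"
  then obtain r where r: "r \<in> V" "r \<notin> snd ` S" "C = blk r" by blast
  show "C \<noteq> {}" using r(3) unfolding blk_def by simp
  show "is_clique V E C"
    unfolding is_clique_def
  proof (intro conjI ballI impI)
    show "C \<subseteq> V" using blk_sub2[OF r(1)] r(3) by simp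
    fix a b assume ab: "a \<in> C" "b \<in> C" "a \<noteq> b"
    then have a: "a = r \<or> (r, a) \<in> S" and b: "b = r \<or> (r, b) \<in> S"
      using r(3) unfolding blk_def by auto
    show "{a, b} \<in> E"
    proof (cases "a = r")
      case True
      then have "(r, b) \<in> S" using b ab(3) by auto
      then show ?thesis using S_mem True by blast
    next
      case False
      then have ra: "(r, a) \<in> S" using a by simp
      show ?thesis
      proof (cases "b = r")
        case True
        then have "{r, a} \<in> E" using S_mem[OF ra] by blast
        then show ?thesis using True by (simp add: insert_commute)
      next
        case False
        then have "(r, b) \<in> S" using b by simp
        then show ?thesis using S_same[OF ra] ab(3) by blast
      qed
    qed
  qed
next
  fix C D assume CD: "C \<in> blk ` (V - snd ` S)" "D \<in> blk ` (V - snd ` S)" "C \<noteq> D"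
  then obtain r r' where r: "r \<in> V" "r \<notin> snd ` S" "C = blk r"
    and r': "r' \<in> V" "r' \<notin> snd ` S" "D = blk r'" by blast
  have "r \<noteq> r'" using CD(3) r(3) r'(3) by auto
  show "C \<inter> D = {}"
  proof (rule ccontr)
    assume "C \<inter> D \<noteq> {}"
    then obtain x where "x \<in> blk r" "x \<in> blk r'" using r(3) r'(3) by blast
    then have x1: "x = r \<or> (r, x) \<in> S" and x2: "x = r' \<or> (r', x) \<in> S" unfolding blk_def by auto
    have "x \<noteq> r"
    proof
      assume "x = r"
      then have "(r', r) \<in> S" using x2 \<open>r \<noteq> r'\<close> by auto
      then show False using r(2) by force
    qed
    moreover have "x \<noteq> r'"
    proof
      assume "x = r'"
      then have "(r, r') \<in> S" using x1 \<open>r \<noteq> r'\<close> by auto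
      then show False using r'(2) by force
    qed
    ultimately have "(r, x) \<in> S" "(r', x) \<in> S" using x1 x2 by auto
    then show False using S_snd \<open>r \<noteq> r'\<close> by blast
  qed
qed

lemma phi_psi: "phi (psi V S) = S"
proof (intro equalityI subsetI)
  fix p assume "p \<in> phi (psi V S)"
  then obtain C v where p: "p = (Min C, v)" "C \<in> psi V S" "v \<in> C" "v \<noteq> Min C"
    unfolding phi_def by blast
  then obtain r where r: "r \<in> V" "C = blk r" unfolding psi_eq by blast
  have "Min C = r" using blk_Min[OF r(1)] r(2) by simp
  then show "p \<in> S" using p r(2) unfolding blk_def by auto
next
  fix p assume pS: "p \<in> S"
  obtain u v where p: "p = (u, v)" by (cases p)
  have uv: "(u, v) \<in> S" using pS p by simp
  have "u \<in> V - snd ` S" using S_root[OF uv] S_mem[OF uv] by blast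
  then have "blk u \<in> psi V S" unfolding psi_eq by blast
  moreover have "v \<in> blk u" unfolding blk_def using uv by simp
  moreover have "Min (blk u) = u" using blk_Min S_mem[OF uv] by blast
  moreover have "v \<noteq> u" using S_mem[OF uv] by simp
  ultimately show "p \<in> phi (psi V S)" unfolding phi_def p by force
qed

end

lemma i_hat:
  assumes fV: "finite V"
  shows "i_coeff (hW V E) (hF V E) j = card {P \<in> cov V E. card P + j = card V}"
proof -
  have inj: "inj_on phi (cov V E)"
    by (rule inj_on_inverseI[where g="psi V"]) (rule psi_phi[OF fV])
  have "{S. independent_set (hW V E) (hF V E) S \<and> card S = j} = phi ` {P \<in> cov V E. card P + j = card V}"
  proof (intro equalityI subsetI)
    fix S assume "S \<in> {S. independent_set (hW V E) (hF V E) S \<and> card S = j}"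
    then have S: "independent_set (hW V E) (hF V E) S" "card S = j" by auto
    have "psi V S \<in> cov V E" by (rule psi_cov[OF fV S(1)])
    moreover have "card (phi (psi V S)) + card (psi V S) = card V"
      by (rule phi_card[OF fV \<open>psi V S \<in> cov V E\<close>])
    ultimately have "psi V S \<in> {P \<in> cov V E. card P + j = card V}"
      using phi_psi[OF fV S(1)] S(2) by simp
    then show "S \<in> phi ` {P \<in> cov V E. card P + j = card V}"
      using phi_psi[OF fV S(1)] by (metis imageI)
  next
    fix S assume "S \<in> phi ` {P \<in> cov V E. card P + j = card V}"
    then obtain P where P: "P \<in> cov V E" "card P + j = card V" "S = phi P" by blast
    have "card S = j" using phi_card[OF fV P(1)] P(2,3) by simp
    then show "S \<in> {S. independent_set (hW V E) (hF V E) S \<and> card S = j}"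
      using phi_indep[OF fV P(1)] P(3) by simp
  qed
  then show ?thesis unfolding i_coeff_def
    by (simp add: card_image inj_on_subset[OF inj])
qed

lemma a_cov: "a_coeff V E k = card {P \<in> cov V E. card P = k}"
  unfolding a_coeff_def clique_covers_def cov_def
  by (rule arg_cong[where f=card]) blast



lemma sum_extend:
  fixes f :: "nat \<Rightarrow> real"
  assumes "M \<le> N" and "\<And>j. M < j \<Longrightarrow> f j = 0"
  shows "(\<Sum>j=0..N. f j) = (\<Sum>j=0..M. f j)"
  by (rule sum.mono_neutral_right) (use assms in auto)

lemma main_nat:
  fixes V :: "nat set" and E :: "nat set set"
  assumes sg: "simple_graph V E" and ne: "V \<noteq> {}" and x: "x \<noteq> 0"
  shows "adjoint_poly V E x = x ^ card V * indep_poly (hW V E) (hF V E) (1 / x)"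
proof -
  have fV: "finite V" using sg by (simp add: simple_graph_def)
  define n where "n = card V"
  define W where "W = hW V E"
  define F where "F = hF V E"
  define a where "a = a_coeff V E"
  define i where "i = i_coeff W F"
  have ij: "i j = (if j \<le> n then a (n - j) else 0)" for j
  proof -
    have "i j = card {P \<in> cov V E. card P + j = n}"
      unfolding i_def W_def F_def n_def by (rule i_hat[OF fV])
    also have "\<dots> = (if j \<le> n then a (n - j) else 0)"
    proof (cases "j \<le> n")
      case True
      then have "{P \<in> cov V E. card P + j = n} = {P \<in> cov V E. card P = n - j}" by auto
      then show ?thesis using True unfolding a_def a_cov by simp
    next
      case False
      then have "{P \<in> cov V E. card P + j = n} = {}" by auto
      then show ?thesis using False by simp
    qed
    finally show ?thesis .
  qed
  have a0: "a 0 = 0"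
  proof -
    have e0: "{P \<in> cov V E. card P = 0} = {}"
    proof (rule ccontr)
      assume "{P \<in> cov V E. card P = 0} \<noteq> {}"
      then obtain P where "P \<in> cov V E" "card P = 0" by blast
      then have "P = {}" "\<Union>P = V" unfolding cov_def by auto
      then show False using ne by simp
    qed
    show ?thesis unfolding a_def a_cov e0 by simp
  qed
  have fW: "finite W" using simple_hat[OF fV] unfolding W_def simple_graph_def by (rule conjunct1)
  have iW: "i j = 0" if "card W < j" for j
  proof -
    have e0: "{S. independent_set W F S \<and> card S = j} = {}"
    proof (rule ccontr)
      assume "{S. independent_set W F S \<and> card S = j} \<noteq> {}"
      then obtain S where "independent_set W F S" "card S = j" by blast
      then have "S \<subseteq> W" "card S = j" unfolding independent_set_def by auto
      then have "card S \<le> card W" using card_mono[OF fW] by blast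
      then show False using that \<open>card S = j\<close> by simp
    qed
    show ?thesis unfolding i_def i_coeff_def e0 by simp
  qed
  define g where "g j = (-1) ^ j * real (i j) * (1 / x) ^ j" for j
  have "indep_poly W F (1 / x) = (\<Sum>j=0..card W. g j)"
    unfolding indep_poly_def g_def i_def ..
  also have "\<dots> = (\<Sum>j=0..card W + n. g j)"
    by (rule sum_extend[symmetric]) (auto simp: g_def iW)
  also have "\<dots> = (\<Sum>j=0..n. g j)"
    by (rule sum_extend) (auto simp: g_def ij)
  finally have I: "indep_poly W F (1 / x) = (\<Sum>j=0..n. g j)" .
  have "x ^ n * (\<Sum>j=0..n. g j) = (\<Sum>j=0..n. (-1) ^ j * real (a (n - j)) * x ^ (n - j))"
    unfolding sum_distrib_left
  proof (rule sum.cong[OF refl])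
    fix j assume "j \<in> {0..n}"
    then have jn: "j \<le> n" by simp
    have "x ^ n = x ^ (n - j) * x ^ j" using jn by (simp flip: power_add)
    then have "x ^ n * (1 / x) ^ j = x ^ (n - j)" using x by (simp add: power_one_over)
    then show "x ^ n * g j = (-1) ^ j * real (a (n - j)) * x ^ (n - j)"
      unfolding g_def using jn ij[of j] by (simp add: algebra_simps)
  qed
  also have "\<dots> = (\<Sum>k=0..n. (-1) ^ (n - k) * real (a k) * x ^ k)"
    by (subst sum.atLeastAtMost_rev) (rule sum.cong[OF refl], auto)
  also have "\<dots> = (\<Sum>k=1..n. (-1) ^ (n - k) * real (a k) * x ^ k)"
    by (subst sum.atLeast_Suc_atMost) (auto simp: a0)
  finally show ?thesis
    unfolding adjoint_poly_def I[unfolded W_def F_def] n_def a_def by simp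
qed

theorem theorem1:
  fixes V :: "'a set" and E :: "'a set set"
  assumes "simple_graph V E" and "V \<noteq> {}"
  shows "\<exists>(W :: nat set) (F :: nat set set). simple_graph W F \<and>
           (\<forall>x::real. x \<noteq> 0 \<longrightarrow>
              adjoint_poly V E x = x ^ card V * indep_poly W F (1 / x))"
proof -
  have fV: "finite V" using assms(1) by (simp add: simple_graph_def)
  obtain f :: "'a \<Rightarrow> nat" where f: "inj_on f V"
    using finite_imp_inj_to_nat_seg[OF fV] by blast
  define V' where "V' = f ` V"
  define E' where "E' = (`) f ` E"
  have sg': "simple_graph V' E'" unfolding V'_def E'_def by (rule simple_graph_image[OF assms(1) f])
  have ne': "V' \<noteq> {}" using assms(2) unfolding V'_def by simp
  have fV': "finite V'" using sg' by (simp add: simple_graph_def)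
  have ad: "adjoint_poly V E x = adjoint_poly V' E' x" for x
    unfolding adjoint_poly_def V'_def E'_def coeff_image[OF assms(1) f] ..
  define W where "W = prod_encode ` hW V' E'"
  define F where "F = (`) prod_encode ` hF V' E'"
  have sgh: "simple_graph (hW V' E') (hF V' E')" by (rule simple_hat[OF fV'])
  have injp: "inj_on prod_encode (hW V' E')" by (rule inj_prod_encode)
  have sgW: "simple_graph W F" unfolding W_def F_def by (rule simple_graph_image[OF sgh injp])
  have ip: "indep_poly W F y = indep_poly (hW V' E') (hF V' E') y" for y
    unfolding indep_poly_def W_def F_def coeff_image[OF sgh injp] ..
  have cV: "card V' = card V" unfolding V'_def using f by (simp add: card_image)
  show ?thesis
  proof (intro exI conjI allI impI)
    show "simple_graph W F" by (rule sgW)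
    fix x :: real assume "x \<noteq> 0"
    show "adjoint_poly V E x = x ^ card V * indep_poly W F (1 / x)"
      unfolding ad ip cV[symmetric] by (rule main_nat[OF sg' ne' \<open>x \<noteq> 0\<close>])
  qed
qed

end
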